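(* Let $m,n\geq 1$ be integers. Then \[ \sum_{k=1}^{n}{n\brack k}\frac{(q^m/z;q)_k(z;q)_{n-k}}{(zq^{-m};q)_{m+n}(1-q^k)^{m}}z^k =-\sum_{1\leq k_m\leq k_{m-1}\leq\cdots\leq k_1\leq n}\ \prod_{i=1}^{m}\frac{q^{k_i}}{(1-zq^{k_i-i})(1-q^{k_i})}. \]
   Context: For $N\geq 0$, $(x;q)_N=(1-x)(1-xq)\cdots(1-xq^{N-1})$ (with $(x;q)_0=1$). The $q$-binomial coefficient is ${n\brack k}=\frac{(q;q)_n}{(q;q)_k(q;q)_{n-k}}$ for $0\leq k\leq n$ and $0$ otherwise. The identity is one of rational functions in $q$ and $z$. *)

theory Defs
  imports Complex_Main "HOL-Library.FuncSet"
begin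

definition qpoch :: "complex \<Rightarrow> complex \<Rightarrow> nat \<Rightarrow> complex" where
  "qpoch x q N = (\<Prod>j<N. (1 - x * q ^ j))"

definition qbinom :: "complex \<Rightarrow> nat \<Rightarrow> nat \<Rightarrow> complex" where
  "qbinom q n k = (if k \<le> n then qpoch q q n / (qpoch q q k * qpoch q q (n - k)) else 0)"

end

theory Submission
  imports Defs
begin

lemma qpoch_0[simp]: "qpoch x q 0 = 1" by (simp add: qpoch_def)

lemma qpoch_Suc: "qpoch x q (Suc n) = qpoch x q n * (1 - x * q ^ n)"
  by (simp add: qpoch_def)

lemma qpoch_Suc_shift: "qpoch x q (Suc n) = (1 - x) * qpoch (x * q) q n"
  unfolding qpoch_def by (subst prod.lessThan_Suc_shift) (simp add: mult.assoc)

lemma qpoch_add: "qpoch x q (a + b) = qpoch x q a * qpoch (x * q ^ a) q b"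
  by (induction b) (simp_all add: qpoch_Suc power_add mult_ac)

lemma qpoch_prefix: "qpoch x q N \<noteq> 0 \<Longrightarrow> a \<le> N \<Longrightarrow> qpoch x q a \<noteq> 0"
  using qpoch_add[of x q a "N - a"] by auto

lemma qqpoch_nz: assumes "\<forall>i\<in>{1..n}. 1 - q ^ i \<noteq> (0::complex)" "j \<le> n"
  shows "qpoch q q j \<noteq> 0"
  using assms unfolding qpoch_def
  by (auto simp: power_Suc[symmetric] simp del: power_Suc)

lemma qbinom_self: assumes "qpoch q q n \<noteq> 0" shows "qbinom q n n = 1"
  using assms by (simp add: qbinom_def)

lemma qbinom_zero: assumes "qpoch q q n \<noteq> 0" shows "qbinom q n 0 = 1"
  using assms by (simp add: qbinom_def)

lemma qbinom_gt: "n < k \<Longrightarrow> qbinom q n k = 0"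
  by (simp add: qbinom_def)

lemma pascal_alg:
  fixes a b c x y :: complex
  assumes "a \<noteq> 0" "b \<noteq> 0" "1 - x \<noteq> 0" "1 - y \<noteq> 0"
  shows "c*(1-x*y)/(a*(1-x)*(b*(1-y))) = c/(a*(1-x)*b) + y*(c/(a*(b*(1-y))))"
    "c*(1-x*y)/(a*(1-x)*(b*(1-y))) = x*(c/(a*(1-x)*b)) + (c/(a*(b*(1-y))))"
    "c*(1-x*y)/(a*(1-x)*(b*(1-y))) * (1-x) = (c/(a*(b*(1-y)))) * (1 - x*y)"
  using assms by (simp_all add: divide_simps) (simp_all add: algebra_simps)

lemma qbinom_pascal:
  assumes h: "\<forall>i\<in>{1..Suc n}. 1 - q ^ i \<noteq> (0::complex)" and jn: "j \<le> n"
  shows "qbinom q (Suc n) (Suc j) = qbinom q n (Suc j) + q^(n - j) * qbinom q n j"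
    and "qbinom q (Suc n) (Suc j) = q^(Suc j) * qbinom q n (Suc j) + qbinom q n j"
    and "qbinom q (Suc n) (Suc j) * (1 - q^(Suc j)) = qbinom q n j * (1 - q^(Suc n))"
proof -
  obtain r where n: "n = j + r" using jn le_Suc_ex by blast
  have nz: "\<And>i. i \<le> Suc n \<Longrightarrow> qpoch q q i \<noteq> 0" using qqpoch_nz[OF h] by blast
  have u: "1 - q^(Suc j) \<noteq> 0" using bspec[OF h, of "Suc j"] jn by simp
  have v: "1 - q^(Suc n) \<noteq> 0" using bspec[OF h, of "Suc n"] by simp
  have "(qbinom q (Suc n) (Suc j) = qbinom q n (Suc j) + q^(n - j) * qbinom q n j) \<and>
    (qbinom q (Suc n) (Suc j) = q^(Suc j) * qbinom q n (Suc j) + qbinom q n j) \<and>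
    (qbinom q (Suc n) (Suc j) * (1 - q^(Suc j)) = qbinom q n j * (1 - q^(Suc n)))"
  proof (cases r)
    case 0
    have "qpoch q q (Suc n) = qpoch q q n * (1 - q^(Suc n))" by (simp add: qpoch_Suc)
    then show ?thesis using 0 n nz[of n] nz[of "Suc n"] v
      by (simp add: qbinom_def qbinom_self)
  next
    case (Suc r')
    define a where "a = qpoch q q j"
    define b where "b = qpoch q q r'"
    define c where "c = qpoch q q n"
    define x where "x = q ^ Suc j"
    define y where "y = q ^ Suc r'"
    have a0: "a \<noteq> 0" using nz[of j] jn by (simp add: a_def)
    have b0: "b \<noteq> 0" using nz[of r'] n Suc by (simp add: b_def)
    have x0: "1 - x \<noteq> 0" using u by (simp add: x_def)
    have y0: "1 - y \<noteq> 0" using bspec[OF h, of "Suc r'"] n Suc by (simp add: y_def)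
    have e1: "qpoch q q (Suc j) = a * (1 - x)" by (simp add: qpoch_Suc a_def x_def)
    have e2: "qpoch q q (Suc r') = b * (1 - y)" by (simp add: qpoch_Suc b_def y_def)
    have e3: "qpoch q q (Suc n) = c * (1 - x * y)"
      by (simp add: qpoch_Suc c_def x_def y_def n Suc power_add[symmetric])
    have d1: "Suc n - Suc j = Suc r'" "n - Suc j = r'" "n - j = Suc r'" using n Suc by auto
    have B1: "qbinom q (Suc n) (Suc j) = c * (1 - x*y) / (a * (1-x) * (b * (1-y)))"
      using jn by (simp add: qbinom_def d1 e1 e2 e3)
    have B0: "qbinom q n (Suc j) = c / (a * (1-x) * b)"
      using jn n Suc by (simp add: qbinom_def d1 e1 c_def b_def)
    have C: "qbinom q n j = c / (a * (b * (1-y)))"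
      using jn by (simp add: qbinom_def d1 e2 c_def a_def)
    have V: "1 - q^(Suc n) = 1 - x*y"
      by (simp add: x_def y_def n Suc power_add[symmetric])
    show ?thesis unfolding B1 B0 C V d1
      using pascal_alg[OF a0 b0 x0 y0, of c] unfolding y_def[symmetric] x_def[symmetric]
      by simp
  qed
  then show "qbinom q (Suc n) (Suc j) = qbinom q n (Suc j) + q^(n - j) * qbinom q n j"
    and "qbinom q (Suc n) (Suc j) = q^(Suc j) * qbinom q n (Suc j) + qbinom q n j"
    and "qbinom q (Suc n) (Suc j) * (1 - q^(Suc j)) = qbinom q n j * (1 - q^(Suc n))"
    by auto
qed

lemma key_alg:
  fixes B1 B0 C Z z q Q X :: complex
  assumes "q \<noteq> 0" "B1 = B0 + (q*Q)*C" "B1 = X*B0 + C"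
  shows "B1*(Z*(1-z*Q)) - B0*Z*(1 - z*(Q*X)) = C*(q*Q)*((1-z/q)*Z)"
proof -
  have "B1*(Z*(1-z*Q)) - B0*Z*(1 - z*(Q*X)) = Z*((B1 - B0) - z*Q*(B1 - X*B0))" by (simp add: algebra_simps)
  also have "\<dots> = Z*(q*Q*C - z*Q*C)"
  proof -
    have e1: "B1 - B0 = q*Q*C" using assms(2) by simp
    have e2: "B1 - X*B0 = C" using assms(3) by simp
    show ?thesis unfolding e1 e2 by simp
  qed
  also have "\<dots> = C*(q*Q)*((1-z/q)*Z)" using assms(1) by (simp add: field_simps)
  finally show ?thesis .
qed

lemma qkey:
  assumes h: "\<forall>i\<in>{1..Suc n}. 1 - q ^ i \<noteq> (0::complex)" and q0: "q \<noteq> 0" and jn: "j \<le> n"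
  shows "qbinom q (Suc n) (Suc j) * qpoch z q (n - j) - qbinom q n (Suc j) * qpoch z q (n - Suc j) * (1 - z*q^n)
         = qbinom q n j * q^(n-j) * qpoch (z/q) q (n-j)"
proof -
  obtain r where n: "n = j + r" using jn le_Suc_ex by blast
  have nz: "\<And>i. i \<le> Suc n \<Longrightarrow> qpoch q q i \<noteq> 0" using qqpoch_nz[OF h] by blast
  show ?thesis
  proof (cases r)
    case 0
    then show ?thesis using n nz[of n] nz[of "Suc n"]
      by (simp add: qbinom_self qbinom_gt)
  next
    case (Suc r')
    have d: "n - j = Suc r'" "n - Suc j = r'" using n Suc by auto
    have P1: "qbinom q (Suc n) (Suc j) = qbinom q n (Suc j) + (q * q^r') * qbinom q n j"
      using qbinom_pascal(1)[OF h jn] d by simp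
    have P2: "qbinom q (Suc n) (Suc j) = q^(Suc j) * qbinom q n (Suc j) + qbinom q n j"
      using qbinom_pascal(2)[OF h jn] .
    have qn: "q^n = q^r' * q^(Suc j)" using n Suc by (simp add: power_add[symmetric] add.commute)
    have z1: "qpoch z q (Suc r') = qpoch z q r' * (1 - z*q^r')" by (simp add: qpoch_Suc)
    have z2: "qpoch (z/q) q (Suc r') = (1 - z/q) * qpoch z q r'"
      using q0 by (simp add: qpoch_Suc_shift)
    show ?thesis unfolding d qn z1 z2 power_Suc
      using key_alg[OF q0 P1 P2, of "qpoch z q r'" z] by (simp add: mult_ac)
  qed
qed

lemma qkey0:
  assumes h: "\<forall>i\<in>{1..Suc n}. 1 - q ^ i \<noteq> (0::complex)"
  shows "qbinom q (Suc n) 0 * qpoch z q (Suc n) - qbinom q n 0 * qpoch z q n * (1 - z*q^n) = 0"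
  using qqpoch_nz[OF h, of n] qqpoch_nz[OF h, of "Suc n"]
  by (simp add: qbinom_zero qpoch_Suc)


definition Cs :: "complex \<Rightarrow> complex \<Rightarrow> nat \<Rightarrow> complex" where
  "Cs q z n = (\<Sum>k=0..n. qbinom q n k * qpoch (1/z) q k * qpoch z q (n-k) * z^k)"

lemma Cs_term:
  assumes h: "\<forall>i\<in>{1..Suc n}. 1 - q ^ i \<noteq> (0::complex)" and q0: "q \<noteq> 0" and z0: "z \<noteq> 0"
    and jn: "j \<le> n"
  shows "qbinom q (Suc n) (Suc j) * qpoch (1/z) q (Suc j) * qpoch z q (Suc n - Suc j) * z^(Suc j)
     - (1 - z*q^n) * (qbinom q n (Suc j) * qpoch (1/z) q (Suc j) * qpoch z q (n - Suc j) * z^(Suc j))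
     = (z - 1) * q^n * (qbinom q n j * qpoch (1/(z/q)) q j * qpoch (z/q) q (n-j) * (z/q)^j)"
proof -
  have "qbinom q (Suc n) (Suc j) * qpoch (1/z) q (Suc j) * qpoch z q (Suc n - Suc j) * z^(Suc j)
     - (1 - z*q^n) * (qbinom q n (Suc j) * qpoch (1/z) q (Suc j) * qpoch z q (n - Suc j) * z^(Suc j))
     = qpoch (1/z) q (Suc j) * z^(Suc j) * (qbinom q (Suc n) (Suc j) * qpoch z q (n - j) - qbinom q n (Suc j) * qpoch z q (n - Suc j) * (1 - z*q^n))"
    by (simp add: algebra_simps)
  also have "\<dots> = qpoch (1/z) q (Suc j) * z^(Suc j) * (qbinom q n j * q^(n-j) * qpoch (z/q) q (n-j))"
    using qkey[OF h q0 jn] by simp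
  also have "\<dots> = (z - 1) * q^n * (qbinom q n j * qpoch (1/(z/q)) q j * qpoch (z/q) q (n-j) * (z/q)^j)"
  proof -
    have e1: "qpoch (1/z) q (Suc j) = (1 - 1/z) * qpoch (1/(z/q)) q j"
      by (simp add: qpoch_Suc_shift)
    have e2: "q^n = q^(n-j) * q^j" using jn by (simp add: power_add[symmetric])
    show ?thesis unfolding e1 e2 using z0 q0
      by (simp add: field_simps power_divide)
  qed
  finally show ?thesis .
qed

lemma Cs_rec:
  assumes h: "\<forall>i\<in>{1..Suc n}. 1 - q ^ i \<noteq> (0::complex)" and q0: "q \<noteq> 0" and z0: "z \<noteq> 0"
  shows "Cs q z (Suc n) = (1 - z*q^n) * Cs q z n + (z-1)*q^n * Cs q (z/q) n"
proof -
  define t where "t m k = qbinom q m k * qpoch (1/z) q k * qpoch z q (m-k) * z^k" for m k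
  have c1: "Cs q z (Suc n) = t (Suc n) 0 + (\<Sum>j=0..n. t (Suc n) (Suc j))"
    unfolding Cs_def t_def by (subst sum.atLeast0_atMost_Suc_shift) simp
  have "Cs q z n = (\<Sum>k=0..Suc n. t n k)"
    unfolding Cs_def t_def by (simp add: qbinom_gt)
  also have "\<dots> = t n 0 + (\<Sum>j=0..n. t n (Suc j))"
    by (subst sum.atLeast0_atMost_Suc_shift) simp
  finally have c2: "Cs q z n = t n 0 + (\<Sum>j=0..n. t n (Suc j))" .
  have c0: "t (Suc n) 0 - (1 - z*q^n) * t n 0 = 0"
    using qkey0[OF h, of z] unfolding t_def by (simp add: algebra_simps)
  have cj: "t (Suc n) (Suc j) - (1 - z*q^n) * t n (Suc j) =
      (z - 1) * q^n * (qbinom q n j * qpoch (1/(z/q)) q j * qpoch (z/q) q (n-j) * (z/q)^j)"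
    if "j \<in> {0..n}" for j
    using Cs_term[OF h q0 z0, of j] that unfolding t_def by simp
  have "Cs q z (Suc n) - (1 - z*q^n) * Cs q z n
     = (t (Suc n) 0 - (1 - z*q^n) * t n 0) + (\<Sum>j=0..n. t (Suc n) (Suc j) - (1 - z*q^n) * t n (Suc j))"
    unfolding c1 c2 by (simp add: algebra_simps sum_subtractf sum_distrib_left sum.distrib)
  also have "\<dots> = (\<Sum>j=0..n. (z - 1) * q^n * (qbinom q n j * qpoch (1/(z/q)) q j * qpoch (z/q) q (n-j) * (z/q)^j))"
    using c0 cj by simp
  also have "\<dots> = (z-1)*q^n * Cs q (z/q) n"
    unfolding Cs_def by (simp add: sum_distrib_left)
  finally show ?thesis by (simp add: algebra_simps)
qed

lemma Cs_zero:
  assumes h: "\<forall>i\<in>{1..n}. 1 - q ^ i \<noteq> (0::complex)" and q0: "q \<noteq> 0" and z0: "z \<noteq> 0"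
    and n1: "n \<ge> 1"
  shows "Cs q z n = 0"
  using assms
proof (induction n arbitrary: z)
  case 0
  then show ?case by simp
next
  case (Suc n)
  have h': "\<forall>i\<in>{1..n}. 1 - q ^ i \<noteq> 0" using Suc.prems(1) by auto
  have zq: "z/q \<noteq> 0" using Suc.prems q0 by simp
  show ?case
  proof (cases n)
    case 0
    then show ?thesis using Cs_rec[OF Suc.prems(1) q0 Suc.prems(3)]
      by (simp add: Cs_def qbinom_def)
  next
    case (Suc n')
    then have "Cs q z n = 0" "Cs q (z/q) n = 0"
      using Suc.IH[OF h' q0] Suc.prems zq by auto
    then show ?thesis using Cs_rec[OF Suc.prems(1) q0 Suc.prems(3)] by simp
  qed
qed

lemma T_alg:
  fixes B1 B0 C Q Z1 Z2 Z3 X D' w u v P zq zS :: complex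
  assumes "D' \<noteq> 0" "w \<noteq> 0" "u \<noteq> 0" "v \<noteq> 0"
    and key: "B1*Z1 - B0*Z2*w = C*Q*Z3" and rat: "B1*u = C*v" and pw: "P*zq = Q*zS"
  shows "B1*X*Z1/((D'*w)*u^(Suc m))*zS - B0*X*Z2/(D'*u^(Suc m))*zS = P/(w*v) * (B1*X*Z3/(D'*u^m)*zq)"
proof -
  have "B1*X*Z1/((D'*w)*u^(Suc m))*zS - B0*X*Z2/(D'*u^(Suc m))*zS
      = X*zS/(D'*w*u^(Suc m)) * (B1*Z1 - B0*Z2*w)"
    using assms(1-4) by (simp add: field_simps)
  also have "\<dots> = X*zS/(D'*w*u^(Suc m)) * (C*Q*Z3)" using key by simp
  also have "\<dots> = X*(Q*zS)*Z3*(C*v)/(D'*w*v*u^(Suc m))"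
    using assms(1-4) by (simp add: field_simps)
  also have "\<dots> = X*(P*zq)*Z3*(B1*u)/(D'*w*v*u^(Suc m))"
    using pw rat by simp
  also have "\<dots> = P/(w*v) * (B1*X*Z3/(D'*u^m)*zq)"
    using assms(1-4) by (simp add: field_simps)
  finally show ?thesis .
qed

definition T :: "complex \<Rightarrow> nat \<Rightarrow> complex \<Rightarrow> nat \<Rightarrow> nat \<Rightarrow> complex" where
  "T q m z n k = qbinom q n k * qpoch (q ^ m / z) q k * qpoch z q (n - k)
            / (qpoch (z / q ^ m) q (m + n) * (1 - q ^ k) ^ m) * z ^ k"

definition A :: "complex \<Rightarrow> nat \<Rightarrow> complex \<Rightarrow> nat \<Rightarrow> complex" where
  "A q m z n = (\<Sum>k=1..n. T q m z n k)"

lemma A0: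
  assumes h: "\<forall>i\<in>{1..n}. 1 - q ^ i \<noteq> (0::complex)" and q0: "q \<noteq> 0" and z0: "z \<noteq> 0"
    and n1: "n \<ge> 1" and D: "qpoch z q n \<noteq> 0"
  shows "A q 0 z n = -1"
proof -
  have "0 = Cs q z n" using Cs_zero[OF h q0 z0 n1] by simp
  also have "\<dots> = qpoch z q n + (\<Sum>k=1..n. qbinom q n k * qpoch (1/z) q k * qpoch z q (n-k) * z^k)"
  proof -
    have "{0..n} = insert 0 {1..n}" by auto
    then show ?thesis unfolding Cs_def using qqpoch_nz[OF h, of n] by (simp add: qbinom_zero)
  qed
  also have "(\<Sum>k=1..n. qbinom q n k * qpoch (1/z) q k * qpoch z q (n-k) * z^k) = qpoch z q n * A q 0 z n"
    unfolding A_def T_def using D by (simp add: sum_distrib_left)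
  finally have "qpoch z q n * (A q 0 z n + 1) = 0" by (simp add: algebra_simps)
  then have "A q 0 z n + 1 = 0" using D by simp
  then show ?thesis by (simp add: eq_neg_iff_add_eq_0)
qed

lemma T_step:
  assumes h: "\<forall>i\<in>{1..Suc n}. 1 - q ^ i \<noteq> (0::complex)" and q0: "q \<noteq> 0" and z0: "z \<noteq> 0"
    and D: "qpoch (z / q ^ Suc m) q (Suc m + Suc n) \<noteq> 0" and jn: "j \<le> n"
  shows "T q (Suc m) z (Suc n) (Suc j) - T q (Suc m) z n (Suc j)
        = q^(Suc n) / ((1 - z*q^n) * (1 - q^(Suc n))) * T q m (z/q) (Suc n) (Suc j)"
proof -
  define D' where "D' = qpoch (z / q ^ Suc m) q (Suc m + n)"
  have eD: "qpoch (z / q ^ Suc m) q (Suc m + Suc n) = D' * (1 - z*q^n)"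
  proof -
    have "z / q ^ Suc m * q ^ (Suc m + n) = z * q^n" using q0 by (simp add: power_add)
    then show ?thesis unfolding D'_def by (simp add: qpoch_Suc)
  qed
  have D'0: "D' \<noteq> 0" and w0: "1 - z*q^n \<noteq> 0" using D eD by auto
  have u0: "1 - q^(Suc j) \<noteq> 0" using bspec[OF h, of "Suc j"] jn by simp
  have v0: "1 - q^(Suc n) \<noteq> 0" using bspec[OF h, of "Suc n"] by simp
  have e1: "q ^ m / (z / q) = q ^ Suc m / z" using q0 by simp
  have e2: "z / q / q ^ m = z / q ^ Suc m" by simp
  have e3: "m + Suc n = Suc m + n" by simp
  have pw: "q^(Suc n) * (z/q)^(Suc j) = q^(n-j) * z^(Suc j)"
  proof -
    have "q^(Suc n) = q^(n-j) * q^(Suc j)" using jn by (simp add: power_add[symmetric])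
    then show ?thesis using q0 by (simp add: power_divide)
  qed
  have key: "qbinom q (Suc n) (Suc j) * qpoch z q (n - j) - qbinom q n (Suc j) * qpoch z q (n - Suc j) * (1 - z*q^n)
         = qbinom q n j * q^(n-j) * qpoch (z/q) q (n-j)"
    using qkey[OF h q0 jn] .
  have rat: "qbinom q (Suc n) (Suc j) * (1 - q^(Suc j)) = qbinom q n j * (1 - q^(Suc n))"
    using qbinom_pascal(3)[OF h jn] .
  have "T q (Suc m) z (Suc n) (Suc j) - T q (Suc m) z n (Suc j) =
    qbinom q (Suc n) (Suc j) * qpoch (q ^ Suc m / z) q (Suc j) * qpoch z q (n - j) / ((D' * (1 - z*q^n)) * (1 - q^(Suc j))^(Suc m)) * z^(Suc j)
    - qbinom q n (Suc j) * qpoch (q ^ Suc m / z) q (Suc j) * qpoch z q (n - Suc j) / (D' * (1 - q^(Suc j))^(Suc m)) * z^(Suc j)"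
    unfolding T_def eD D'_def[symmetric] by simp
  also have "\<dots> = q^(Suc n) / ((1 - z*q^n) * (1 - q^(Suc n))) * (qbinom q (Suc n) (Suc j) * qpoch (q ^ Suc m / z) q (Suc j) * qpoch (z/q) q (n - j) / (D' * (1 - q^(Suc j))^m) * (z/q)^(Suc j))"
    by (rule T_alg[OF D'0 w0 u0 v0 key rat pw])
  also have "\<dots> = q^(Suc n) / ((1 - z*q^n) * (1 - q^(Suc n))) * T q m (z/q) (Suc n) (Suc j)"
    unfolding T_def e1 e2 e3 D'_def by simp
  finally show ?thesis .
qed


fun S :: "complex \<Rightarrow> nat \<Rightarrow> complex \<Rightarrow> nat \<Rightarrow> complex" where
  "S q 0 z n = 1"
| "S q (Suc m) z n = (\<Sum>k=1..n. q^k / ((1 - z*q^(k-1)) * (1 - q^k)) * S q m (z/q) k)"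

lemma A_step:
  assumes h: "\<forall>i\<in>{1..Suc n}. 1 - q ^ i \<noteq> (0::complex)" and q0: "q \<noteq> 0" and z0: "z \<noteq> 0"
    and D: "qpoch (z / q ^ Suc m) q (Suc m + Suc n) \<noteq> 0"
  shows "A q (Suc m) z (Suc n) = A q (Suc m) z n + q^(Suc n)/((1-z*q^n)*(1-q^(Suc n))) * A q m (z/q) (Suc n)"
proof -
  have a1: "A q (Suc m) z n = (\<Sum>k=1..Suc n. T q (Suc m) z n k)"
    unfolding A_def by (simp add: T_def qbinom_gt)
  have "A q (Suc m) z (Suc n) - A q (Suc m) z n = (\<Sum>k=1..Suc n. T q (Suc m) z (Suc n) k - T q (Suc m) z n k)"
    unfolding a1 by (simp add: A_def sum_subtractf)
  also have "\<dots> = (\<Sum>k=1..Suc n. q^(Suc n)/((1-z*q^n)*(1-q^(Suc n))) * T q m (z/q) (Suc n) k)"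
  proof (rule sum.cong)
    fix k assume k: "k \<in> {1..Suc n}"
    then obtain j where kj: "k = Suc j" and jn: "j \<le> n" by (cases k) auto
    show "T q (Suc m) z (Suc n) k - T q (Suc m) z n k = q^(Suc n)/((1-z*q^n)*(1-q^(Suc n))) * T q m (z/q) (Suc n) k"
      unfolding kj by (rule T_step[OF h q0 z0 D jn])
  qed simp
  also have "\<dots> = q^(Suc n)/((1-z*q^n)*(1-q^(Suc n))) * A q m (z/q) (Suc n)"
    unfolding A_def by (rule sum_distrib_left[symmetric])
  finally show ?thesis by (simp add: algebra_simps)
qed

lemma S_step: "S q (Suc m) z (Suc n) = S q (Suc m) z n + q^(Suc n)/((1-z*q^n)*(1-q^(Suc n))) * S q m (z/q) (Suc n)"
  by (simp add: mult_ac)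

lemma AS:
  assumes q0: "q \<noteq> (0::complex)"
  shows "\<forall>z n. z \<noteq> 0 \<longrightarrow> (\<forall>i\<in>{1..n}. 1 - q ^ i \<noteq> 0) \<longrightarrow> qpoch (z / q ^ Suc m) q (Suc m + n) \<noteq> 0
     \<longrightarrow> A q (Suc m) z n = - S q (Suc m) z n"
proof (induction m)
  case 0
  show ?case
  proof (intro allI impI)
    fix z n assume z0: "z \<noteq> (0::complex)" and h: "\<forall>i\<in>{1..n}. 1 - q ^ i \<noteq> 0"
      and D: "qpoch (z / q ^ Suc 0) q (Suc 0 + n) \<noteq> 0"
    from h D show "A q (Suc 0) z n = - S q (Suc 0) z n"
    proof (induction n)
      case 0
      then show ?case by (simp add: A_def)
    next
      case (Suc n)
      have h': "\<forall>i\<in>{1..n}. 1 - q ^ i \<noteq> 0" using Suc.prems(1) by auto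
      have D': "qpoch (z / q ^ Suc 0) q (Suc 0 + n) \<noteq> 0"
        using qpoch_prefix[OF Suc.prems(2)] by simp
      have Dq: "qpoch (z/q) q (Suc n) \<noteq> 0"
        using qpoch_prefix[OF Suc.prems(2)] by simp
      have A0': "A q 0 (z/q) (Suc n) = -1"
        using A0[OF Suc.prems(1) q0 _ _ Dq] z0 q0 by simp
      show ?case
        unfolding A_step[OF Suc.prems(1) q0 z0 Suc.prems(2)] S_step Suc.IH[OF h' D'] A0'
        by simp
    qed
  qed
next
  case (Suc m)
  note outer = Suc.IH
  show ?case
  proof (intro allI impI)
    fix z n assume z0: "z \<noteq> (0::complex)" and h: "\<forall>i\<in>{1..n}. 1 - q ^ i \<noteq> 0"
      and D: "qpoch (z / q ^ Suc (Suc m)) q (Suc (Suc m) + n) \<noteq> 0"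
    from h D show "A q (Suc (Suc m)) z n = - S q (Suc (Suc m)) z n"
    proof (induction n)
      case 0
      then show ?case by (simp add: A_def)
    next
      case (Suc n)
      have h': "\<forall>i\<in>{1..n}. 1 - q ^ i \<noteq> 0" using Suc.prems(1) by auto
      have D': "qpoch (z / q ^ Suc (Suc m)) q (Suc (Suc m) + n) \<noteq> 0"
        using qpoch_prefix[OF Suc.prems(2)] by simp
      have Dq: "qpoch (z / q / q ^ Suc m) q (Suc m + Suc n) \<noteq> 0"
        using qpoch_prefix[OF Suc.prems(2)] by (simp add: mult.assoc)
      have zq: "z / q \<noteq> 0" using z0 q0 by simp
      have IHm: "A q (Suc m) (z/q) (Suc n) = - S q (Suc m) (z/q) (Suc n)"
        using outer zq Suc.prems(1) Dq by blast
      show ?case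
        unfolding A_step[OF Suc.prems(1) q0 z0 Suc.prems(2)] S_step[of q "Suc m"] Suc.IH[OF h' D'] IHm
        by (simp only: mult_minus_left mult_minus_right minus_add_distrib)
    qed
  qed
qed


lemma chain_mono:
  fixes kk :: "nat \<Rightarrow> nat"
  assumes c: "\<forall>i. 1 \<le> i \<and> i < M \<longrightarrow> (kk (i + 1) :: nat) \<le> kk i"
  shows "1 \<le> x \<Longrightarrow> x \<le> M \<Longrightarrow> kk x \<le> kk 1"
proof (induction x)
  case 0 then show ?case by simp
next
  case (Suc x)
  show ?case
  proof (cases "x = 0")
    case True then show ?thesis by simp
  next
    case False
    then have "kk x \<le> kk 1" using Suc by simp
    moreover have "kk (Suc x) \<le> kk x" using c False Suc.prems by simp
    ultimately show ?thesis by simp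
  qed
qed

definition Ch :: "nat \<Rightarrow> nat \<Rightarrow> (nat \<Rightarrow> nat) set" where
  "Ch m n = {kk \<in> {1..m} \<rightarrow>\<^sub>E {1..n}. \<forall>i. 1 \<le> i \<and> i < m \<longrightarrow> kk (i + 1) \<le> kk i}"

definition F :: "complex \<Rightarrow> complex \<Rightarrow> nat \<Rightarrow> nat \<Rightarrow> complex" where
  "F q z i k = q ^ k / ((1 - z * q powi (int k - int i)) * (1 - q ^ k))"

lemma F_shift: "q \<noteq> 0 \<Longrightarrow> F q z (Suc i) k = F q (z/q) i k"
proof -
  assume q0: "q \<noteq> 0"
  have e: "int k - int (Suc i) = (int k - int i) - 1" by simp
  have p: "q powi (int k - int (Suc i)) = q powi (int k - int i) / q"
    unfolding e using q0 power_int_diff[of q "int k - int i" 1] by simp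
  have "z * (q powi (int k - int i) / q) = z / q * q powi (int k - int i)" by simp
  then show ?thesis unfolding F_def p by (simp only:)
qed

lemma F_one: "1 \<le> k \<Longrightarrow> F q z 1 k = q^k / ((1 - z*q^(k-1)) * (1 - q^k))"
proof -
  assume k: "1 \<le> k"
  have e: "int k - int 1 = int (k - 1)" using k by simp
  have "q powi (int k - int 1) = q^(k-1)" unfolding e by (rule power_int_of_nat)
  then show ?thesis unfolding F_def by (simp only:)
qed

lemma finite_Ch: "finite (Ch m n)"
  unfolding Ch_def by (rule finite_subset[of _ "{1..m} \<rightarrow>\<^sub>E {1..n}"]) (auto intro: finite_PiE)

lemma chain_S:
  assumes q0: "q \<noteq> (0::complex)"
  shows "(\<Sum>kk\<in>Ch m n. \<Prod>i=1..m. F q z i (kk i)) = S q m z n"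
proof (induction m arbitrary: z n)
  case 0
  have "Ch 0 n = {\<lambda>_. undefined}" unfolding Ch_def by auto
  then show ?case by simp
next
  case (Suc m)
  define jf where "jf kk = (kk (1::nat), \<lambda>i. if i \<in> {1..m} then kk (Suc i) else undefined)" for kk :: "nat \<Rightarrow> nat"
  define if' where "if' b = (\<lambda>x. if x = 1 then fst b else if x \<in> {2..Suc m} then snd b (x - 1) else undefined)"
    for b :: "nat \<times> (nat \<Rightarrow> nat)"
  define H where "H b = F q z 1 (fst b) * (\<Prod>i=1..m. F q (z/q) i (snd b i))" for b :: "nat \<times> (nat \<Rightarrow> nat)"
  have "(\<Sum>kk\<in>Ch (Suc m) n. \<Prod>i=1..Suc m. F q z i (kk i)) = (\<Sum>b\<in>Sigma {1..n} (\<lambda>k. Ch m k). H b)"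
  proof (rule sum.reindex_bij_witness[of _ if' jf])
    fix a assume a: "a \<in> Ch (Suc m) n"
    show "if' (jf a) = a"
    proof
      fix x
      have aP: "a \<in> {1..Suc m} \<rightarrow>\<^sub>E {1..n}" using a unfolding Ch_def by blast
      show "if' (jf a) x = a x"
      proof (cases "x = 1")
        case True then show ?thesis by (simp add: if'_def jf_def)
      next
        case F1: False
        show ?thesis
        proof (cases "x \<in> {2..Suc m}")
          case True
          then have "x - 1 \<in> {1..m}" "Suc (x - 1) = x" by auto
          then show ?thesis using F1 True by (simp add: if'_def jf_def)
        next
          case False
          then have "x \<notin> {1..Suc m}" using F1 by auto
          then have "a x = undefined" using PiE_arb[OF aP] by blast
          then show ?thesis unfolding if'_def if_not_P[OF F1] if_not_P[OF False] by simp
        qed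
      qed
    qed
    show "jf a \<in> Sigma {1..n} (\<lambda>k. Ch m k)"
    proof -
      have a1: "a \<in> {1..Suc m} \<rightarrow>\<^sub>E {1..n}" and c: "\<forall>i. 1 \<le> i \<and> i < Suc m \<longrightarrow> a (i + 1) \<le> a i"
        using a unfolding Ch_def by auto
      have "a 1 \<in> {1..n}" using a1 by auto
      moreover have "(\<lambda>i. if i \<in> {1..m} then a (Suc i) else undefined) \<in> Ch m (a 1)"
        unfolding Ch_def
      proof (intro CollectI conjI allI impI PiE_I)
        fix i assume "i \<in> {1..m}"
        then show "(if i \<in> {1..m} then a (Suc i) else undefined) \<in> {1..a 1}"
          using a1 chain_mono[OF c, of "Suc i"] by auto
      next
        fix i assume "i \<notin> {1..m}" then show "(if i \<in> {1..m} then a (Suc i) else undefined) = undefined" by (simp only: if_False)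
      next
        fix i assume i: "1 \<le> i \<and> i < m"
        then have "i+1 \<in> {1..m}" "i \<in> {1..m}" by auto
        moreover have "a (Suc i + 1) \<le> a (Suc i)" using c i by simp
        ultimately show "(if i + 1 \<in> {1..m} then a (Suc (i + 1)) else undefined) \<le> (if i \<in> {1..m} then a (Suc i) else undefined)"
          by simp
      qed
      ultimately show ?thesis by (simp add: jf_def)
    qed
    show "H (jf a) = (\<Prod>i=1..Suc m. F q z i (a i))"
    proof -
      have "(\<Prod>i=1..Suc m. F q z i (a i)) = F q z 1 (a 1) * (\<Prod>i=Suc 1..Suc m. F q z i (a i))"
        by (simp add: prod.atLeast_Suc_atMost)
      also have "(\<Prod>i=Suc 1..Suc m. F q z i (a i)) = (\<Prod>i=1..m. F q z (Suc i) (a (Suc i)))"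
        by (rule prod.shift_bounds_cl_Suc_ivl)
      also have "\<dots> = (\<Prod>i=1..m. F q (z/q) i (a (Suc i)))"
        using F_shift[OF q0] by simp
      finally show ?thesis unfolding H_def jf_def by simp
    qed
  next
    fix b assume b: "b \<in> Sigma {1..n} (\<lambda>k. Ch m k)"
    obtain k h where bkh: "b = (k, h)" by (cases b)
    have k: "k \<in> {1..n}" and h: "h \<in> {1..m} \<rightarrow>\<^sub>E {1..k}" and c: "\<forall>i. 1 \<le> i \<and> i < m \<longrightarrow> h (i + 1) \<le> h i"
      using b bkh unfolding Ch_def by auto
    have hh: "(\<lambda>i. if i \<in> {1..m} then if' b (Suc i) else undefined) = h"
    proof
      fix i
      show "(if i \<in> {1..m} then if' b (Suc i) else undefined) = h i"
      proof (cases "i \<in> {1..m}")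
        case True
        then have "Suc i \<noteq> 1" "Suc i \<in> {2..Suc m}" by auto
        then show ?thesis using True bkh by (simp add: if'_def)
      next
        case False
        have "h i = undefined" using PiE_arb[OF h False] .
        then show ?thesis unfolding if_not_P[OF False] by (rule sym)
      qed
    qed
    have if1: "if' b 1 = k" using bkh by (simp add: if'_def)
    show "jf (if' b) = b"
      unfolding jf_def hh if1 using bkh by simp
    have ifS: "if' b x = h (x - 1)" if "x \<in> {2..Suc m}" for x
      using that bkh by (simp add: if'_def)
    show "if' b \<in> Ch (Suc m) n"
      unfolding Ch_def
    proof (intro CollectI conjI allI impI PiE_I)
      fix x assume x: "x \<in> {1..Suc m}"
      show "if' b x \<in> {1..n}"
      proof (cases "x = 1")
        case True then show ?thesis using k if1 by simp
      next
        case False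
        then have x1: "x - 1 \<in> {1..m}" and x2: "x \<in> {2..Suc m}" using x by auto
        have "h (x - 1) \<in> {1..k}" using PiE_mem[OF h x1] .
        then show ?thesis using k ifS[OF x2] by auto
      qed
    next
      fix x assume "x \<notin> {1..Suc m}"
      then have x1: "x \<noteq> 1" and x2: "x \<notin> {2..Suc m}" by auto
      show "if' b x = undefined" unfolding if'_def if_not_P[OF x1] if_not_P[OF x2] ..
    next
      fix i assume i: "1 \<le> i \<and> i < Suc m"
      show "if' b (i + 1) \<le> if' b i"
      proof (cases "i = 1")
        case True
        then have m1: "1 \<in> {1..m}" and t2: "i + 1 \<in> {2..Suc m}" using i by auto
        have h1: "h 1 \<in> {1..k}" using PiE_mem[OF h m1] .
        have e1: "if' b (i+1) = h 1" using ifS[OF t2] True by simp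
        have e2: "if' b i = k" using if1 True by simp
        show ?thesis unfolding e1 e2 using h1 by simp
      next
        case False
        then have t1: "i + 1 \<in> {2..Suc m}" and t2: "i \<in> {2..Suc m}" using i by auto
        obtain i' where ii: "i = Suc i'" "1 \<le> i'" using False i by (cases i) auto
        have "i' < m" using ii i by simp
        then have "h (i' + 1) \<le> h i'" using c ii(2) by blast
        then show ?thesis unfolding ifS[OF t1] ifS[OF t2] using ii by simp
      qed
    qed
  qed
  also have "\<dots> = (\<Sum>k=1..n. \<Sum>h\<in>Ch m k. H (k, h))"
    by (subst sum.Sigma) (simp_all add: finite_Ch)
  also have "\<dots> = (\<Sum>k=1..n. F q z 1 k * S q m (z/q) k)"
  proof (rule sum.cong)
    fix k
    have "(\<Sum>h\<in>Ch m k. H (k, h)) = F q z 1 k * (\<Sum>h\<in>Ch m k. \<Prod>i=1..m. F q (z/q) i (h i))"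
      unfolding H_def fst_conv snd_conv by (rule sum_distrib_left[symmetric])
    then show "(\<Sum>h\<in>Ch m k. H (k, h)) = F q z 1 k * S q m (z/q) k"
      by (simp only: Suc.IH)
  qed (rule refl)
  also have "\<dots> = S q (Suc m) z n"
    unfolding S.simps
  proof (rule sum.cong)
    fix k assume "k \<in> {1..n}"
    then show "F q z 1 k * S q m (z/q) k = q^k / ((1 - z*q^(k-1)) * (1 - q^k)) * S q m (z/q) k"
      using F_one[of k q z] by simp
  qed (rule refl)
  finally show ?case .
qed


theorem theorem1p2:
  fixes q z :: complex and m n :: nat
  assumes "m \<ge> 1" and "n \<ge> 1"
    and "q \<noteq> 0" and "z \<noteq> 0"
    and "\<forall>k\<in>{1..n}. 1 - q ^ k \<noteq> 0"
    and "qpoch (z / q ^ m) q (m + n) \<noteq> 0"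
    and "\<forall>i\<in>{1..m}. \<forall>j\<in>{1..n}. 1 - z * q powi (int j - int i) \<noteq> 0"
  shows "(\<Sum>k=1..n. qbinom q n k * qpoch (q ^ m / z) q k * qpoch z q (n - k)
            / (qpoch (z / q ^ m) q (m + n) * (1 - q ^ k) ^ m) * z ^ k)
       = - (\<Sum>kk\<in>{kk \<in> {1..m} \<rightarrow>\<^sub>E {1..n}. \<forall>i. 1 \<le> i \<and> i < m \<longrightarrow> kk (i + 1) \<le> kk i}.
              \<Prod>i=1..m. q ^ kk i / ((1 - z * q powi (int (kk i) - int i)) * (1 - q ^ kk i)))"
proof -
  obtain m' where m: "m = Suc m'" using assms(1) by (cases m) auto
  have "(\<Sum>k=1..n. qbinom q n k * qpoch (q ^ m / z) q k * qpoch z q (n - k)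
            / (qpoch (z / q ^ m) q (m + n) * (1 - q ^ k) ^ m) * z ^ k) = A q m z n"
    unfolding A_def T_def ..
  also have "\<dots> = - S q m z n"
    using AS[OF assms(3), of m'] assms(4,5,6) unfolding m by blast
  also have "S q m z n = (\<Sum>kk\<in>Ch m n. \<Prod>i=1..m. F q z i (kk i))"
    using chain_S[OF assms(3)] by simp
  finally show ?thesis unfolding Ch_def F_def .
qed

end
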